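(* Let $\Gamma$ be a geometric distance-regular graph with diameter $D\geq 2$ and intersection number $c_2\geq 2$. Then (i) $\tau_2\geq \psi_1$, and (ii) $\Gamma$ contains an induced quadrangle (a set of four vertices inducing a $4$-cycle).
   Context: A finite connected graph $\Gamma$ with diameter $D$ is distance-regular if there are integers $b_i,c_i$ ($0\le i\le D$) such that for any vertices $x,y$ with $d(x,y)=i$, exactly $c_i$ neighbours of $y$ are at distance $i-1$ from $x$ and exactly $b_i$ neighbours of $y$ are at distance $i+1$ from $x$; its valency is $k=b_0$. Let $\theta_D$ be the smallest eigenvalue of the adjacency matrix. A Delsarte clique is a clique with exactly $1+\frac{k}{-\theta_D}$ vertices. A non-complete distance-regular graph is geometric with respect to a set $\mathcal C$ of Delsarte cliques if every edge lies in exactly one member of $\mathcal C$; it is geometric if such $\mathcal C$ exists. For a vertex $x$ and a set $C$, $d(x,C)=\min_{y\in C}d(x,y)$. It is known that for a Delsarte clique $C$ and a vertex $x$ with $d(x,C)=1$, the number of vertices of $C$ adjacent to $x$ depends only on the intersection numbers of $\Gamma$; this number is denoted $\psi_1$. It is also known that if $\Gamma$ is geometric with respect to $\mathcal C$, then for vertices $x,y$ with $d(x,y)=2$ the number of cliques $C\in\mathcal C$ with $y\in C$ and $d(x,C)=1$ depends neither on the pair $x,y$ nor on the choice of $\mathcal C$; this number is denoted $\tau_2$. *)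

theory Defs
  imports Complex_Main
begin

definition simple_graph :: "'a set \<Rightarrow> ('a \<Rightarrow> 'a \<Rightarrow> bool) \<Rightarrow> bool" where
  "simple_graph V E \<longleftrightarrow> finite V \<and> V \<noteq> {} \<and>
     (\<forall>x y. E x y \<longrightarrow> x \<in> V \<and> y \<in> V) \<and>
     (\<forall>x y. E x y \<longrightarrow> E y x) \<and> (\<forall>x. \<not> E x x)"

definition gdist :: "('a \<Rightarrow> 'a \<Rightarrow> bool) \<Rightarrow> 'a \<Rightarrow> 'a \<Rightarrow> nat" where
  "gdist E x y = (LEAST n. (E ^^ n) x y)"

definition connected_graph :: "'a set \<Rightarrow> ('a \<Rightarrow> 'a \<Rightarrow> bool) \<Rightarrow> bool" where
  "connected_graph V E \<longleftrightarrow> (\<forall>x\<in>V. \<forall>y\<in>V. \<exists>n. (E ^^ n) x y)"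

definition diameter :: "'a set \<Rightarrow> ('a \<Rightarrow> 'a \<Rightarrow> bool) \<Rightarrow> nat" where
  "diameter V E = Max {gdist E x y | x y. x \<in> V \<and> y \<in> V}"

definition distance_regular ::
  "'a set \<Rightarrow> ('a \<Rightarrow> 'a \<Rightarrow> bool) \<Rightarrow> (nat \<Rightarrow> nat) \<Rightarrow> (nat \<Rightarrow> nat) \<Rightarrow> bool" where
  "distance_regular V E b c \<longleftrightarrow> simple_graph V E \<and> connected_graph V E \<and>
     (\<forall>x\<in>V. \<forall>y\<in>V. \<forall>i. gdist E x y = i \<longrightarrow> i \<le> diameter V E \<longrightarrow>
        card {z\<in>V. E y z \<and> gdist E x z + 1 = i} = c i \<and>
        card {z\<in>V. E y z \<and> gdist E x z = i + 1} = b i)"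

text \<open>Eigenvalues of the adjacency matrix (real symmetric, so real eigenvalues
  with real eigenvectors).\<close>
definition adj_eigenvalue :: "'a set \<Rightarrow> ('a \<Rightarrow> 'a \<Rightarrow> bool) \<Rightarrow> real \<Rightarrow> bool" where
  "adj_eigenvalue V E \<theta> \<longleftrightarrow> (\<exists>f :: 'a \<Rightarrow> real. (\<exists>x\<in>V. f x \<noteq> 0) \<and>
     (\<forall>x\<in>V. (\<Sum>y\<in>{y\<in>V. E x y}. f y) = \<theta> * f x))"

definition smallest_eigenvalue :: "'a set \<Rightarrow> ('a \<Rightarrow> 'a \<Rightarrow> bool) \<Rightarrow> real" where
  "smallest_eigenvalue V E = Min {\<theta>. adj_eigenvalue V E \<theta>}"

definition is_clique :: "'a set \<Rightarrow> ('a \<Rightarrow> 'a \<Rightarrow> bool) \<Rightarrow> 'a set \<Rightarrow> bool" where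
  "is_clique V E C \<longleftrightarrow> C \<subseteq> V \<and> (\<forall>x\<in>C. \<forall>y\<in>C. x \<noteq> y \<longrightarrow> E x y)"

definition delsarte_clique ::
  "'a set \<Rightarrow> ('a \<Rightarrow> 'a \<Rightarrow> bool) \<Rightarrow> nat \<Rightarrow> 'a set \<Rightarrow> bool" where
  "delsarte_clique V E k C \<longleftrightarrow> is_clique V E C \<and>
     real (card C) = 1 + real k / (- smallest_eigenvalue V E)"

definition complete_graph :: "'a set \<Rightarrow> ('a \<Rightarrow> 'a \<Rightarrow> bool) \<Rightarrow> bool" where
  "complete_graph V E \<longleftrightarrow> (\<forall>x\<in>V. \<forall>y\<in>V. x \<noteq> y \<longrightarrow> E x y)"

definition geometric_wrt ::
  "'a set \<Rightarrow> ('a \<Rightarrow> 'a \<Rightarrow> bool) \<Rightarrow> nat \<Rightarrow> 'a set set \<Rightarrow> bool" where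
  "geometric_wrt V E k \<C> \<longleftrightarrow> \<not> complete_graph V E \<and>
     (\<forall>C\<in>\<C>. delsarte_clique V E k C) \<and>
     (\<forall>x y. E x y \<longrightarrow> (\<exists>!C. C \<in> \<C> \<and> x \<in> C \<and> y \<in> C))"

definition setdist :: "('a \<Rightarrow> 'a \<Rightarrow> bool) \<Rightarrow> 'a \<Rightarrow> 'a set \<Rightarrow> nat" where
  "setdist E x C = Min (gdist E x ` C)"

text \<open>Quantity whose (constant) value is psi_1: neighbours of x in C, where d(x,C)=1.\<close>
definition psi1_count :: "('a \<Rightarrow> 'a \<Rightarrow> bool) \<Rightarrow> 'a \<Rightarrow> 'a set \<Rightarrow> nat" where
  "psi1_count E x C = card {y\<in>C. E x y}"

text \<open>Quantity whose (constant) value is tau_2: for d(x,y)=2, the number of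
  cliques C in the family with y in C and d(x,C)=1.\<close>
definition tau2_count :: "('a \<Rightarrow> 'a \<Rightarrow> bool) \<Rightarrow> 'a set set \<Rightarrow> 'a \<Rightarrow> 'a \<Rightarrow> nat" where
  "tau2_count E \<C> x y = card {C\<in>\<C>. y \<in> C \<and> setdist E x C = 1}"

definition has_induced_quadrangle :: "'a set \<Rightarrow> ('a \<Rightarrow> 'a \<Rightarrow> bool) \<Rightarrow> bool" where
  "has_induced_quadrangle V E \<longleftrightarrow> (\<exists>a\<in>V. \<exists>b\<in>V. \<exists>c\<in>V. \<exists>d\<in>V.
     distinct [a, b, c, d] \<and> E a b \<and> E b c \<and> E c d \<and> E d a \<and> \<not> E a c \<and> \<not> E b d)"

end

theory Submission
  imports Defs "HOL-Computational_Algebra.Polynomial"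
begin

locale drg =
  fixes V :: "'a set" and E :: "'a \<Rightarrow> 'a \<Rightarrow> bool" and b c :: "nat \<Rightarrow> nat"
  assumes drg: "distance_regular V E b c"
    and diam2: "diameter V E \<ge> 2"
begin

abbreviation "d \<equiv> gdist E"
abbreviation "DD \<equiv> diameter V E"
abbreviation "k \<equiv> b 0"

lemma sg: "simple_graph V E" using drg unfolding distance_regular_def by auto
lemma finV: "finite V" using sg unfolding simple_graph_def by auto
lemma Vne: "V \<noteq> {}" using sg unfolding simple_graph_def by auto
lemma EV: "E x y \<Longrightarrow> x \<in> V \<and> y \<in> V" using sg unfolding simple_graph_def by auto
lemma Esym: "E x y \<Longrightarrow> E y x" using sg unfolding simple_graph_def by auto
lemma Eirr: "\<not> E x x" using sg unfolding simple_graph_def by auto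
lemma conn: "x \<in> V \<Longrightarrow> y \<in> V \<Longrightarrow> \<exists>n. (E ^^ n) x y"
  using drg unfolding distance_regular_def connected_graph_def by auto

lemma walk_d: "x \<in> V \<Longrightarrow> y \<in> V \<Longrightarrow> (E ^^ d x y) x y"
  unfolding gdist_def using conn by (meson LeastI_ex)
lemma d_le: "(E ^^ n) x y \<Longrightarrow> d x y \<le> n"
  unfolding gdist_def by (rule Least_le)

lemma walkV: "(E ^^ n) x y \<Longrightarrow> x \<in> V \<Longrightarrow> y \<in> V"
proof (induction n arbitrary: y)
  case 0 then show ?case by auto
next
  case (Suc n) then show ?case by (auto elim!: relpowp_Suc_E dest: EV)
qed

lemma d_refl: "d x x = 0"
  using d_le[of 0 x x] by auto
lemma d0: "d x y = 0 \<Longrightarrow> x \<in> V \<Longrightarrow> y \<in> V \<Longrightarrow> x = y"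
  using walk_d[of x y] by auto
lemma d_edge: "E x y \<Longrightarrow> d x y = 1"
proof -
  assume e: "E x y"
  have "d x y \<le> 1" using d_le[of 1 x y] e by auto
  moreover have "d x y \<noteq> 0" using d0[of x y] e EV Eirr by blast
  ultimately show ?thesis by simp
qed
lemma d1: "d x y = 1 \<Longrightarrow> x \<in> V \<Longrightarrow> y \<in> V \<Longrightarrow> E x y"
  using walk_d[of x y] by auto
lemma d1_iff: "x \<in> V \<Longrightarrow> y \<in> V \<Longrightarrow> d x y = 1 \<longleftrightarrow> E x y"
  using d1 d_edge by blast

lemma triangle: "x \<in> V \<Longrightarrow> y \<in> V \<Longrightarrow> z \<in> V \<Longrightarrow> d x z \<le> d x y + d y z"
  using walk_d[of x y] walk_d[of y z] relpowp_trans d_le by metis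

lemma rev_walk: "(E ^^ n) x y \<Longrightarrow> (E ^^ n) y x"
proof (induction n arbitrary: y)
  case 0 then show ?case by auto
next
  case (Suc n)
  then obtain z where "(E ^^ n) x z" "E z y" by (auto elim!: relpowp_Suc_E)
  then show ?case using Suc relpowp_Suc_I2 Esym by metis
qed

lemma d_sym: "x \<in> V \<Longrightarrow> y \<in> V \<Longrightarrow> d x y = d y x"
  using walk_d rev_walk d_le by (metis le_antisym)

lemma d_nb: "E y z \<Longrightarrow> x \<in> V \<Longrightarrow> d x z \<le> d x y + 1 \<and> d x y \<le> d x z + 1"
  using triangle[of x y z] triangle[of x z y] d_edge[of y z] d_edge[of z y] Esym EV by fastforce

lemma fin_dset: "finite {d x y | x y. x \<in> V \<and> y \<in> V}"
proof -
  have "{d x y | x y. x \<in> V \<and> y \<in> V} = (\<lambda>(x,y). d x y) ` (V \<times> V)" by auto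
  then show ?thesis using finV by simp
qed

lemma d_le_D: "x \<in> V \<Longrightarrow> y \<in> V \<Longrightarrow> d x y \<le> DD"
  unfolding diameter_def using fin_dset by (intro Max_ge) auto

lemma D_attained: "\<exists>x\<in>V. \<exists>y\<in>V. d x y = DD"
proof -
  have "DD \<in> {d x y | x y. x \<in> V \<and> y \<in> V}"
    unfolding diameter_def using fin_dset Vne by (intro Max_in) auto
  then obtain x y where "DD = d x y" "x \<in> V" "y \<in> V" by auto
  then show ?thesis by metis
qed

lemma layer: "\<exists>x0\<in>V. \<forall>i\<le>DD. \<exists>w\<in>V. d x0 w = i"
proof -
  obtain x0 y0 where xy: "x0 \<in> V" "y0 \<in> V" "d x0 y0 = DD" using D_attained by blast
  have "\<exists>w\<in>V. d x0 w = i" if "i \<le> DD" for i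
  proof -
    have "(E ^^ (i + (DD - i))) x0 y0" using walk_d[OF xy(1,2)] xy(3) that by simp
    then obtain w where w: "(E ^^ i) x0 w" "(E ^^ (DD - i)) w y0" by (auto simp: relpowp_add)
    have wV: "w \<in> V" using walkV w(1) xy(1) by blast
    have "d x0 w \<le> i" "d w y0 \<le> DD - i" using d_le w by auto
    moreover have "DD \<le> d x0 w + d w y0" using triangle[OF xy(1) wV xy(2)] xy(3) by simp
    ultimately show ?thesis using wV that by (intro bexI[of _ w]) auto
  qed
  then show ?thesis using xy by blast
qed

lemma dr: "x \<in> V \<Longrightarrow> y \<in> V \<Longrightarrow> card {z\<in>V. E y z \<and> d x z + 1 = d x y} = c (d x y)
   \<and> card {z\<in>V. E y z \<and> d x z = d x y + 1} = b (d x y)"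
  using drg d_le_D unfolding distance_regular_def by blast

definition "N z = {w\<in>V. E z w}"

lemma finN: "finite (N z)" unfolding N_def using finV by auto

lemma deg: "z \<in> V \<Longrightarrow> card (N z) = k"
proof -
  assume zV: "z \<in> V"
  have "N z = {w\<in>V. E z w \<and> d z w = 0 + 1}" unfolding N_def using d_edge by auto
  then show ?thesis using dr[OF zV zV] d_refl by simp
qed

definition "a j = real k - real (b j) - real (c j)"


lemma c0: "c 0 = 0"
proof -
  obtain x where "x \<in> V" using Vne by auto
  then show ?thesis using dr[of x x] d_refl by simp
qed

lemma nb_sum:
  assumes yV: "y \<in> V" and zV: "z \<in> V"
  shows "(\<Sum>w\<in>N z. h (d y w)) = real (c (d y z)) * h (d y z - 1) + a (d y z) * h (d y z)
           + real (b (d y z)) * h (d y z + 1)"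
proof -
  define j where "j = d y z"
  define A1 where "A1 = {w\<in>V. E z w \<and> d y w + 1 = j}"
  define A2 where "A2 = {w\<in>V. E z w \<and> d y w = j}"
  define A3 where "A3 = {w\<in>V. E z w \<and> d y w = j + 1}"
  have c1: "card A1 = c j" and c3: "card A3 = b j" using dr[OF yV zV] unfolding A1_def A3_def j_def by auto
  have fin: "finite A1" "finite A2" "finite A3" unfolding A1_def A2_def A3_def using finV by auto
  have NU: "N z = A1 \<union> A2 \<union> A3"
  proof
    show "N z \<subseteq> A1 \<union> A2 \<union> A3"
    proof
      fix w assume "w \<in> N z"
      then have "E z w" "w \<in> V" unfolding N_def by auto
      then have "d y w \<le> j + 1" "j \<le> d y w + 1" using d_nb[of z w y] yV unfolding j_def by auto
      then show "w \<in> A1 \<union> A2 \<union> A3" using \<open>E z w\<close> \<open>w \<in> V\<close> unfolding A1_def A2_def A3_def by auto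
    qed
  qed (auto simp: N_def A1_def A2_def A3_def)
  have dis: "A1 \<inter> A2 = {}" "(A1 \<union> A2) \<inter> A3 = {}" unfolding A1_def A2_def A3_def by auto
  have cardN: "card (N z) = card A1 + card A2 + card A3"
    using NU dis fin by (simp add: card_Un_disjoint)
  have a2: "real (card A2) = a j" using cardN deg[OF zV] c1 c3 unfolding a_def by simp
  have "(\<Sum>w\<in>N z. h (d y w)) = (\<Sum>w\<in>A1. h (d y w)) + (\<Sum>w\<in>A2. h (d y w)) + (\<Sum>w\<in>A3. h (d y w))"
    using NU dis fin by (simp add: sum.union_disjoint)
  also have "(\<Sum>w\<in>A1. h (d y w)) = (\<Sum>w\<in>A1. h (j - 1))"
    by (rule sum.cong) (auto simp: A1_def)
  also have "(\<Sum>w\<in>A2. h (d y w)) = (\<Sum>w\<in>A2. h j)"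
    by (rule sum.cong) (auto simp: A2_def)
  also have "(\<Sum>w\<in>A3. h (d y w)) = (\<Sum>w\<in>A3. h (j + 1))"
    by (rule sum.cong) (auto simp: A3_def)
  finally show ?thesis using c1 c3 a2 unfolding j_def by simp
qed


definition "eig \<theta> g \<longleftrightarrow> (\<forall>x\<in>V. (\<Sum>y\<in>N x. g y) = \<theta> * g x)"
definition "S g x i = (\<Sum>z\<in>{z\<in>V. d x z = i}. g z)"

lemma swap_count:
  assumes eg: "eig \<theta> g" and xV: "x \<in> V"
  shows "\<theta> * S g x i = (\<Sum>w\<in>V. g w * real (card {z\<in>N w. d x z = i}))"
proof -
  let ?L = "{z\<in>V. d x z = i}"
  have finL: "finite ?L" using finV by auto
  have "\<theta> * S g x i = (\<Sum>z\<in>?L. \<theta> * g z)" unfolding S_def by (simp add: sum_distrib_left)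
  also have "\<dots> = (\<Sum>z\<in>?L. \<Sum>w\<in>V. if E z w then g w else 0)"
  proof (rule sum.cong)
    fix z assume "z \<in> ?L"
    then have "\<theta> * g z = (\<Sum>w\<in>N z. g w)" using eg unfolding eig_def by auto
    also have "\<dots> = (\<Sum>w\<in>V. if E z w then g w else 0)" unfolding N_def using finV
      by (simp add: sum.inter_filter)
    finally show "\<theta> * g z = (\<Sum>w\<in>V. if E z w then g w else 0)" .
  qed simp
  also have "\<dots> = (\<Sum>w\<in>V. \<Sum>z\<in>?L. if E z w then g w else 0)" by (rule sum.swap)
  also have "\<dots> = (\<Sum>w\<in>V. g w * real (card {z\<in>N w. d x z = i}))"
  proof (rule sum.cong)
    fix w assume wV: "w \<in> V"
    have "(\<Sum>z\<in>?L. if E z w then g w else 0) = (\<Sum>z\<in>{z\<in>?L. E z w}. g w)"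
      by (rule sum.inter_filter[OF finL, symmetric])
    also have "{z\<in>?L. E z w} = {z\<in>N w. d x z = i}" unfolding N_def using Esym by blast
    finally show "(\<Sum>z\<in>?L. if E z w then g w else 0) = g w * real (card {z\<in>N w. d x z = i})"
      by simp
  qed simp
  finally show ?thesis .
qed

lemma count_formula:
  assumes xV: "x \<in> V" and wV: "w \<in> V"
  shows "real (card {z\<in>N w. d x z = i}) =
     real (c (d x w)) * (if d x w - 1 = i then 1 else 0) + a (d x w) * (if d x w = i then 1 else 0)
     + real (b (d x w)) * (if d x w + 1 = i then 1 else 0)"
proof -
  have "(\<Sum>z\<in>{z\<in>N w. d x z = i}. (1::real)) = (\<Sum>z\<in>N w. (\<lambda>t. if t = i then 1 else 0) (d x z))"
    by (rule sum.inter_filter[OF finN])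
  then show ?thesis using nb_sum[OF xV wV, of "\<lambda>t. if t = i then (1::real) else 0"] by simp
qed

lemma S_rec:
  assumes eg: "eig \<theta> g" and xV: "x \<in> V"
  shows "\<theta> * S g x i = real (c (i+1)) * S g x (i+1) + a i * S g x i
          + (if i = 0 then 0 else real (b (i - 1)) * S g x (i - 1))"
proof -
  have "\<theta> * S g x i = (\<Sum>w\<in>V. (if d x w = i + 1 then real (c (i+1)) * g w else 0)
      + (if d x w = i then a i * g w else 0) + (if i \<noteq> 0 \<and> d x w = i - 1 then real (b (i-1)) * g w else 0))"
    unfolding swap_count[OF eg xV]
  proof (rule sum.cong)
    fix w assume wV: "w \<in> V"
    show "g w * real (card {z\<in>N w. d x z = i}) = (if d x w = i + 1 then real (c (i+1)) * g w else 0)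
      + (if d x w = i then a i * g w else 0) + (if i \<noteq> 0 \<and> d x w = i - 1 then real (b (i-1)) * g w else 0)"
      unfolding count_formula[OF xV wV] using c0
      by (cases "d x w"; cases i) (auto simp: algebra_simps)
  qed simp
  also have "\<dots> = real (c (i+1)) * S g x (i+1) + a i * S g x i
          + (if i = 0 then 0 else real (b (i - 1)) * S g x (i - 1))"
    unfolding S_def using finV
    by (simp add: sum.distrib sum.inter_filter[symmetric] sum_distrib_left)
  finally show ?thesis .
qed


lemma c1: "c 1 = 1"
proof -
  obtain x0 where x0: "x0 \<in> V" "\<forall>i\<le>DD. \<exists>w\<in>V. d x0 w = i" using layer by blast
  have "1 \<le> DD" using diam2 by simp
  then obtain w where w: "w \<in> V" "d x0 w = 1" using x0(2) by blast
  have "{z\<in>V. E w z \<and> d x0 z + 1 = d x0 w} = {x0}"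
    using w x0 d1[of x0 w] Esym d0[of x0] d_refl by auto
  then show ?thesis using dr[OF x0(1) w(1)] w by simp
qed

lemma cpos: "1 \<le> i \<Longrightarrow> i \<le> DD \<Longrightarrow> c i > 0"
proof -
  assume i: "1 \<le> i" "i \<le> DD"
  obtain x0 where x0: "x0 \<in> V" "\<forall>i\<le>DD. \<exists>w\<in>V. d x0 w = i" using layer by blast
  then obtain w where w: "w \<in> V" "d x0 w = i" using i by blast
  obtain j where j: "i = Suc j" using i by (cases i) auto
  have "(E ^^ Suc j) x0 w" using walk_d[OF x0(1) w(1)] w j by simp
  then obtain z where z: "(E ^^ j) x0 z" "E z w" by (auto elim: relpowp_Suc_E)
  have "d x0 z \<le> j" using d_le z by auto
  moreover have "d x0 w \<le> d x0 z + 1" using d_nb[OF z(2) x0(1)] by auto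
  ultimately have "z \<in> {z\<in>V. E w z \<and> d x0 z + 1 = d x0 w}" using z EV Esym w j by auto
  then have "{z\<in>V. E w z \<and> d x0 z + 1 = d x0 w} \<noteq> {}" by blast
  moreover have "finite {z\<in>V. E w z \<and> d x0 z + 1 = d x0 w}" using finV by auto
  ultimately have "card {z\<in>V. E w z \<and> d x0 z + 1 = d x0 w} > 0" by (simp add: card_gt_0_iff)
  then show ?thesis using dr[OF x0(1) w(1)] w by simp
qed

fun Pp :: "nat \<Rightarrow> real poly" where
  "Pp 0 = 1"
| "Pp (Suc 0) = [:0, 1:]"
| "Pp (Suc (Suc i)) = smult (1 / real (c (Suc (Suc i))))
     ([:- a (Suc i), 1:] * Pp (Suc i) - smult (real (b i)) (Pp i))"

definition "P \<theta> i = poly (Pp i) \<theta>"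

lemma P0: "P \<theta> 0 = 1" and P1: "P \<theta> 1 = \<theta>" unfolding P_def by auto

lemma P_rec: "c (Suc (Suc i)) \<noteq> 0 \<Longrightarrow>
  real (c (Suc (Suc i))) * P \<theta> (Suc (Suc i)) = (\<theta> - a (Suc i)) * P \<theta> (Suc i) - real (b i) * P \<theta> i"
  unfolding P_def by (simp add: algebra_simps)

lemma coeff_lin: "coeff ([:a0, 1:] * p) (Suc n) = a0 * coeff p (Suc n) + (coeff p n :: real)"
  by simp

lemma Pp_coeff: "i \<le> DD \<Longrightarrow> coeff (Pp i) i > 0 \<and> (\<forall>n>i. coeff (Pp i) n = 0)"
proof (induction i rule: Pp.induct)
  case 1 then show ?case by (auto simp: coeff_eq_0)
next
  case 2 then show ?case by (auto simp: coeff_pCons split: nat.splits)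
next
  case (3 i)
  have cp: "real (c (Suc (Suc i))) > 0" using cpos[of "Suc (Suc i)"] 3 by auto
  have IH1: "coeff (Pp (Suc i)) (Suc i) > 0" "\<forall>n>Suc i. coeff (Pp (Suc i)) n = 0" using 3 by auto
  have IH0: "\<forall>n>i. coeff (Pp i) n = 0" using 3 by auto
  have "coeff (Pp (Suc (Suc i))) (Suc (Suc i)) = (1 / real (c (Suc (Suc i)))) * coeff (Pp (Suc i)) (Suc i)"
    using IH1 IH0 by (simp add: coeff_lin)
  moreover have "\<forall>n>Suc (Suc i). coeff (Pp (Suc (Suc i))) n = 0"
  proof (intro allI impI)
    fix n assume n: "n > Suc (Suc i)"
    then obtain m where m: "n = Suc m" by (cases n) auto
    show "coeff (Pp (Suc (Suc i))) n = 0" using IH1 IH0 n m by (simp add: coeff_lin)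
  qed
  ultimately show ?case using cp IH1(1) by (simp del: Pp.simps)
qed


lemma L0: "x \<in> V \<Longrightarrow> {z\<in>V. d x z = 0} = {x}" using d0 d_refl by auto
lemma L1: "x \<in> V \<Longrightarrow> {z\<in>V. d x z = 1} = N x" unfolding N_def using d1_iff by auto

lemma S_P2:
  assumes eg: "eig \<theta> g" and xV: "x \<in> V"
  shows "Suc i \<le> DD \<Longrightarrow> S g x i = P \<theta> i * g x \<and> S g x (Suc i) = P \<theta> (Suc i) * g x"
proof (induction i)
  case 0
  have "S g x 0 = g x" unfolding S_def L0[OF xV] by simp
  moreover have "S g x 1 = \<theta> * g x" unfolding S_def L1[OF xV] using eg xV unfolding eig_def by auto
  ultimately show ?case by (simp add: P_def)
next
  case (Suc i)
  then have IH: "S g x i = P \<theta> i * g x" "S g x (Suc i) = P \<theta> (Suc i) * g x" by auto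
  have cp: "real (c (Suc (Suc i))) > 0" using cpos[of "Suc (Suc i)"] Suc by auto
  have r: "\<theta> * S g x (Suc i) = real (c (Suc (Suc i))) * S g x (Suc (Suc i)) + a (Suc i) * S g x (Suc i)
          + real (b i) * S g x i" using S_rec[OF eg xV, of "Suc i"] by simp
  have pr: "real (c (Suc (Suc i))) * P \<theta> (Suc (Suc i)) = (\<theta> - a (Suc i)) * P \<theta> (Suc i) - real (b i) * P \<theta> i"
    using P_rec cp by simp
  have "real (c (Suc (Suc i))) * S g x (Suc (Suc i)) = \<theta> * S g x (Suc i) - a (Suc i) * S g x (Suc i) - real (b i) * S g x i"
    using r by simp
  also have "\<dots> = g x * ((\<theta> - a (Suc i)) * P \<theta> (Suc i) - real (b i) * P \<theta> i)"
    using IH by (simp add: algebra_simps)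
  also have "\<dots> = real (c (Suc (Suc i))) * (P \<theta> (Suc (Suc i)) * g x)" using pr by simp
  finally have "real (c (Suc (Suc i))) * S g x (Suc (Suc i)) = real (c (Suc (Suc i))) * (P \<theta> (Suc (Suc i)) * g x)" .
  then have "S g x (Suc (Suc i)) = P \<theta> (Suc (Suc i)) * g x" using cp by simp
  then show ?case using IH by simp
qed

lemma S_P:
  assumes eg: "eig \<theta> g" and xV: "x \<in> V" and i: "i \<le> DD"
  shows "S g x i = P \<theta> i * g x"
proof (cases i)
  case 0 then show ?thesis using S_P2[OF eg xV, of 0] diam2 by simp
next
  case (Suc j) then show ?thesis using S_P2[OF eg xV, of j] i by simp
qed

definition "Rp = [:- a DD, 1:] * Pp DD - smult (real (b (DD - 1))) (Pp (DD - 1))"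

lemma closure:
  assumes eg: "eig \<theta> g" and xV: "x \<in> V" and gx: "g x \<noteq> 0"
  shows "(\<theta> - a DD) * P \<theta> DD = real (b (DD - 1)) * P \<theta> (DD - 1)"
proof -
  have e: "{z\<in>V. d x z = DD + 1} = {}" using d_le_D xV by fastforce
  have S0: "S g x (DD + 1) = 0" unfolding S_def e by simp
  have "\<theta> * S g x DD = a DD * S g x DD + real (b (DD - 1)) * S g x (DD - 1)"
    using S_rec[OF eg xV, of DD] S0 diam2 by simp
  then have "((\<theta> - a DD) * P \<theta> DD - real (b (DD - 1)) * P \<theta> (DD - 1)) * g x = 0"
    using S_P[OF eg xV, of DD] S_P[OF eg xV, of "DD - 1"] by (simp add: algebra_simps)
  then show ?thesis using gx by simp
qed

lemma Rp_nz: "Rp \<noteq> 0"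
proof -
  obtain m where m: "DD = Suc m" using diam2 by (cases DD) auto
  have "coeff Rp (Suc DD) = coeff (Pp DD) DD"
    using Pp_coeff[of DD] Pp_coeff[of "DD - 1"] unfolding Rp_def by (simp add: coeff_lin)
  then show ?thesis using Pp_coeff[of DD] by auto
qed

lemma eig_adj: "adj_eigenvalue V E \<theta> \<longleftrightarrow> (\<exists>g. eig \<theta> g \<and> (\<exists>x\<in>V. g x \<noteq> 0))"
  unfolding adj_eigenvalue_def eig_def N_def by auto

lemma fin_eig: "finite {\<theta>. adj_eigenvalue V E \<theta>}"
proof (rule finite_subset[OF _ poly_roots_finite[OF Rp_nz]])
  show "{\<theta>. adj_eigenvalue V E \<theta>} \<subseteq> {x. poly Rp x = 0}"
  proof
    fix \<theta> assume "\<theta> \<in> {\<theta>. adj_eigenvalue V E \<theta>}"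
    then obtain g x where "eig \<theta> g" "x \<in> V" "g x \<noteq> 0" using eig_adj by auto
    from closure[OF this] show "\<theta> \<in> {x. poly Rp x = 0}"
      unfolding Rp_def P_def by (simp add: algebra_simps)
  qed
qed

lemma eig_k: "eig (real k) (\<lambda>_. 1)"
  unfolding eig_def using deg by simp

lemma theta_eig: "adj_eigenvalue V E (smallest_eigenvalue V E)"
proof -
  have "adj_eigenvalue V E (real k)" using eig_k Vne eig_adj by force
  then have "{\<theta>. adj_eigenvalue V E \<theta>} \<noteq> {}" by auto
  then show ?thesis unfolding smallest_eigenvalue_def using Min_in[OF fin_eig] by auto
qed


definition "K i = P (real k) i"

lemma Kcard: "x \<in> V \<Longrightarrow> i \<le> DD \<Longrightarrow> real (card {z\<in>V. d x z = i}) = K i"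
  using S_P[OF eig_k, of x i] unfolding S_def K_def by simp

lemma Kpos: "i \<le> DD \<Longrightarrow> K i > 0"
proof -
  assume i: "i \<le> DD"
  obtain x0 where x0: "x0 \<in> V" "\<forall>i\<le>DD. \<exists>w\<in>V. d x0 w = i" using layer by blast
  then obtain w where "w \<in> V" "d x0 w = i" using i by blast
  then have "{z\<in>V. d x0 z = i} \<noteq> {}" by blast
  moreover have "finite {z\<in>V. d x0 z = i}" using finV by simp
  ultimately have "card {z\<in>V. d x0 z = i} > 0" by (simp add: card_gt_0_iff)
  then show ?thesis using Kcard[OF x0(1) i] by simp
qed

lemma K0: "K 0 = 1" and K1: "K 1 = real k" unfolding K_def P_def by auto

lemma a0: "a 0 = 0" unfolding a_def using c0 by simp

lemma Krel: "i < DD \<Longrightarrow> real (b i) * K i = real (c (Suc i)) * K (Suc i)"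
proof (induction i)
  case 0 then show ?case using K0 K1 c1 by simp
next
  case (Suc i)
  have cp: "c (Suc (Suc i)) \<noteq> 0" using cpos[of "Suc (Suc i)"] Suc.prems by auto
  have "real (c (Suc (Suc i))) * K (Suc (Suc i)) = (real k - a (Suc i)) * K (Suc i) - real (b i) * K i"
    using P_rec[OF cp, of "real k"] unfolding K_def by simp
  also have "\<dots> = real (b (Suc i)) * K (Suc i)" using Suc unfolding a_def by (simp add: algebra_simps)
  finally show ?case by simp
qed

lemma bD: "b DD = 0"
proof -
  obtain x y where xy: "x \<in> V" "y \<in> V" "d x y = DD" using D_attained by blast
  have e: "{z\<in>V. E y z \<and> d x z = d x y + 1} = {}" using d_le_D xy by fastforce
  have "b (d x y) = card {z\<in>V. E y z \<and> d x z = d x y + 1}" using dr[OF xy(1,2)] by simp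
  then show ?thesis using e xy(3) card.empty by metis
qed

definition "u \<theta> i = P \<theta> i / K i"

lemma kpos: "real k > 0" using Kpos[of 1] K1 diam2 by simp

lemma rho_eq:
  assumes cl: "(\<theta> - a DD) * P \<theta> DD = real (b (DD - 1)) * P \<theta> (DD - 1)"
    and j: "j \<le> DD"
  shows "real (c j) * u \<theta> (j - 1) + a j * u \<theta> j + real (b j) * u \<theta> (j + 1) = \<theta> * u \<theta> j"
proof (cases j)
  case 0
  then show ?thesis using c0 a0 kpos unfolding u_def K0 K1 by (simp add: P_def K_def)
next
  case (Suc j')
  have Kj: "K j > 0" using Kpos j by simp
  have Kj': "K j' > 0" using Kpos j Suc by simp
  have e: "real (c j) * K j = real (b j') * K j'" using Krel[of j'] Suc j by simp
  have "real (c j) * K j * u \<theta> (j - 1) = real (b j') * K j' * (P \<theta> j' / K j')"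
    unfolding e u_def using Suc by simp
  then have r1: "real (c j) * K j * u \<theta> (j - 1) = real (b j') * P \<theta> j'" using Kj' by simp
  show ?thesis
  proof (cases "j = DD")
    case True
    have "K j * (real (c j) * u \<theta> (j - 1) + a j * u \<theta> j + real (b j) * u \<theta> (j + 1))
       = real (b j') * P \<theta> j' + a j * P \<theta> j"
      using r1 bD True Kj unfolding u_def by (simp add: algebra_simps)
    also have "\<dots> = K j * (\<theta> * u \<theta> j)"
    proof -
      have jj: "j' = DD - 1" using Suc True by simp
      show ?thesis using cl True Kj unfolding u_def jj by (simp add: field_simps)
    qed
    finally show ?thesis using Kj by simp
  next
    case False
    then have jl: "j < DD" using j by simp
    have KS: "K (Suc j) > 0" using Kpos jl by simp
    have cS: "c (Suc (Suc j')) \<noteq> 0" using cpos[of "Suc j"] jl Suc by simp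
    have r3: "real (b j) * K j * u \<theta> (j + 1) = real (c (Suc j)) * P \<theta> (Suc j)"
      using Krel[OF jl] KS unfolding u_def by simp
    have pr: "real (c (Suc (Suc j'))) * P \<theta> (Suc (Suc j')) = (\<theta> - a (Suc j')) * P \<theta> (Suc j') - real (b j') * P \<theta> j'"
      using P_rec[OF cS] by simp
    have "K j * (real (c j) * u \<theta> (j - 1) + a j * u \<theta> j + real (b j) * u \<theta> (j + 1))
       = real (b j') * P \<theta> j' + a j * P \<theta> j + real (c (Suc j)) * P \<theta> (Suc j)"
      using r1 r3 Kj unfolding u_def by (simp add: algebra_simps)
    also have "\<dots> = K j * (\<theta> * u \<theta> j)" using pr Suc Kj unfolding u_def by (simp add: algebra_simps)
    finally show ?thesis using Kj by simp
  qed
qed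

lemma rho_eig:
  assumes cl: "(\<theta> - a DD) * P \<theta> DD = real (b (DD - 1)) * P \<theta> (DD - 1)"
    and yV: "y \<in> V"
  shows "eig \<theta> (\<lambda>z. u \<theta> (d y z))"
  unfolding eig_def
proof
  fix z assume zV: "z \<in> V"
  show "(\<Sum>w\<in>N z. u \<theta> (d y w)) = \<theta> * u \<theta> (d y z)"
    unfolding nb_sum[OF yV zV] using rho_eq[OF cl d_le_D[OF yV zV]] .
qed

lemma gram:
  assumes eg: "eig \<theta> g" and xV: "x \<in> V"
  shows "(\<Sum>z\<in>V. h (d x z) * g z) = (\<Sum>i\<le>DD. h i * P \<theta> i) * g x"
proof -
  have "(\<Sum>z\<in>V. h (d x z) * g z) = (\<Sum>i\<le>DD. \<Sum>z\<in>{z\<in>V. d x z = i}. h (d x z) * g z)"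
    by (rule sum.group[symmetric]) (use finV d_le_D xV in auto)
  also have "\<dots> = (\<Sum>i\<le>DD. h i * S g x i)"
    unfolding S_def by (rule sum.cong) (auto simp: sum_distrib_left)
  also have "\<dots> = (\<Sum>i\<le>DD. h i * P \<theta> i * g x)"
    by (rule sum.cong) (auto simp: S_P[OF eg xV])
  finally show ?thesis by (simp add: sum_distrib_right)
qed


lemma u0: "u \<theta> 0 = 1" unfolding u_def K0 by (simp add: P_def)
lemma u1: "u \<theta> 1 = \<theta> / real k" unfolding u_def K1 by (simp add: P_def)

lemma delsarte_zero:
  assumes cl: "(\<theta> - a DD) * P \<theta> DD = real (b (DD - 1)) * P \<theta> (DD - 1)"
    and C: "is_clique V E C" and m: "(real (card C) - 1) * \<theta> = - real k"
    and zV: "z \<in> V"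
  shows "(\<Sum>y\<in>C. u \<theta> (d y z)) = 0"
proof -
  have CV: "C \<subseteq> V" using C unfolding is_clique_def by auto
  have finC: "finite C" using CV finV finite_subset by blast
  define F where "F z = (\<Sum>y\<in>C. u \<theta> (d y z))" for z
  have eigF: "eig \<theta> F" unfolding eig_def
  proof
    fix x assume xV: "x \<in> V"
    have "(\<Sum>w\<in>N x. F w) = (\<Sum>y\<in>C. \<Sum>w\<in>N x. u \<theta> (d y w))" unfolding F_def by (rule sum.swap)
    also have "\<dots> = (\<Sum>y\<in>C. \<theta> * u \<theta> (d y x))"
      by (rule sum.cong) (use rho_eig[OF cl] CV xV in \<open>auto simp: eig_def\<close>)
    also have "\<dots> = \<theta> * F x" unfolding F_def by (simp add: sum_distrib_left)
    finally show "(\<Sum>w\<in>N x. F w) = \<theta> * F x" .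
  qed
  define cst where "cst = (\<Sum>i\<le>DD. u \<theta> i * P \<theta> i)"
  have FC: "F y = 0" if yC: "y \<in> C" for y
  proof -
    have "F y = u \<theta> (d y y) + (\<Sum>y'\<in>C - {y}. u \<theta> (d y' y))"
      unfolding F_def using sum.remove[OF finC yC] by simp
    also have "(\<Sum>y'\<in>C - {y}. u \<theta> (d y' y)) = (\<Sum>y'\<in>C - {y}. u \<theta> 1)"
    proof (rule sum.cong)
      fix y' assume "y' \<in> C - {y}"
      then have "E y' y" using C yC unfolding is_clique_def by auto
      then show "u \<theta> (d y' y) = u \<theta> 1" using d_edge by simp
    qed simp
    also have "\<dots> = (real (card C) - 1) * (\<theta> / real k)"
    proof -
      have "card C \<ge> 1" using yC finC by (metis One_nat_def Suc_leI card_gt_0_iff empty_iff)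
      then have "real (card (C - {y})) = real (card C) - 1" using yC finC by (simp add: of_nat_diff)
      then show ?thesis using u1 by simp
    qed
    also have "\<dots> = -1" using m kpos by (simp add: field_simps)
    finally show ?thesis using d_refl u0 by simp
  qed
  have "(\<Sum>z\<in>V. F z * F z) = (\<Sum>z\<in>V. \<Sum>y\<in>C. u \<theta> (d y z) * F z)"
    unfolding F_def[of z] by (simp add: sum_distrib_right F_def)
  also have "\<dots> = (\<Sum>y\<in>C. \<Sum>z\<in>V. u \<theta> (d y z) * F z)" by (rule sum.swap)
  also have "\<dots> = (\<Sum>y\<in>C. cst * F y)"
    by (rule sum.cong) (use gram[OF eigF] CV in \<open>auto simp: cst_def\<close>)
  also have "\<dots> = 0" using FC by simp
  finally have "(\<Sum>z\<in>V. F z * F z) = 0" .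
  then have "F z * F z = 0" using sum_nonneg_eq_0_iff[of V "\<lambda>z. F z * F z"] finV zV by simp
  then show ?thesis unfolding F_def by simp
qed


lemma setdist1:
  assumes CV: "C \<subseteq> V" and Cne: "C \<noteq> {}" and C: "is_clique V E C"
    and xV: "x \<in> V" and sd: "setdist E x C = 1"
  shows "x \<notin> C" "\<exists>y0\<in>C. E x y0" "\<And>y. y \<in> C \<Longrightarrow> d y x = (if E x y then 1 else 2)"
proof -
  have finC: "finite C" using CV finV finite_subset by blast
  have mn: "Min (d x ` C) = 1" using sd unfolding setdist_def .
  have ge: "d x y \<ge> 1" if "y \<in> C" for y
    using Min_le[of "d x ` C" "d x y"] finC that mn by auto
  show xn: "x \<notin> C" using ge d_refl by fastforce
  have "1 \<in> d x ` C" using Min_in[of "d x ` C"] finC Cne mn by auto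
  then obtain y0 where y0: "y0 \<in> C" "d x y0 = 1" by auto
  then show "\<exists>y0\<in>C. E x y0" using d1 xV CV by blast
  fix y assume yC: "y \<in> C"
  have "d y0 y \<le> 1"
  proof (cases "y = y0")
    case True then show ?thesis using d_refl by simp
  next
    case False then have "E y0 y" using C yC y0 unfolding is_clique_def by auto
    then show ?thesis using d_edge by simp
  qed
  moreover have "y0 \<in> V" "y \<in> V" using CV y0 yC by auto
  then have "d x y \<le> d x y0 + d y0 y" by (rule triangle[OF xV])
  ultimately have "d x y \<le> 2" using y0 by linarith
  moreover have "d x y = 1 \<longleftrightarrow> E x y" using d1_iff xV yC CV by auto
  ultimately have "d x y = (if E x y then 1 else 2)" using ge[OF yC] by auto
  then show "d y x = (if E x y then 1 else 2)" using d_sym xV yC CV by auto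
qed

lemma psi_formula:
  assumes cl: "(\<theta> - a DD) * P \<theta> DD = real (b (DD - 1)) * P \<theta> (DD - 1)"
    and C: "is_clique V E C" and m: "(real (card C) - 1) * \<theta> = - real k"
    and th: "\<theta> \<noteq> 0" and Cne: "C \<noteq> {}"
    and xV: "x \<in> V" and sd: "setdist E x C = 1"
  shows "real (psi1_count E x C) = real (card C) * u \<theta> 2 / (u \<theta> 2 - u \<theta> 1)"
proof -
  have CV: "C \<subseteq> V" using C unfolding is_clique_def by auto
  have finC: "finite C" using CV finV finite_subset by blast
  have cpos': "real (card C) > 0" using finC Cne by (simp add: card_gt_0_iff)
  note sd1 = setdist1[OF CV Cne C xV sd]
  have "0 = (\<Sum>y\<in>C. u \<theta> (d y x))" using delsarte_zero[OF cl C m xV] by simp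
  also have "\<dots> = (\<Sum>y\<in>C. u \<theta> 2 + (if E x y then u \<theta> 1 - u \<theta> 2 else 0))"
    by (rule sum.cong) (auto simp: sd1(3))
  also have "\<dots> = real (card C) * u \<theta> 2 + (\<Sum>y\<in>C. if E x y then u \<theta> 1 - u \<theta> 2 else 0)"
    by (simp add: sum.distrib)
  also have "(\<Sum>y\<in>C. if E x y then u \<theta> 1 - u \<theta> 2 else 0) = real (psi1_count E x C) * (u \<theta> 1 - u \<theta> 2)"
  proof -
    have "(\<Sum>y\<in>C. if E x y then u \<theta> 1 - u \<theta> 2 else 0) = (\<Sum>y\<in>{y\<in>C. E x y}. u \<theta> 1 - u \<theta> 2)"
      by (rule sum.inter_filter[OF finC, symmetric])
    then show ?thesis unfolding psi1_count_def by simp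
  qed
  finally have eq: "real (psi1_count E x C) * (u \<theta> 1 - u \<theta> 2) = - real (card C) * u \<theta> 2" by simp
  have ne: "u \<theta> 1 - u \<theta> 2 \<noteq> 0"
  proof
    assume z: "u \<theta> 1 - u \<theta> 2 = 0"
    then have "real (card C) * u \<theta> 2 = 0" using eq by simp
    then have "u \<theta> 2 = 0" "u \<theta> 1 = u \<theta> 2" using cpos' z by auto
    then show False using u1 th kpos by simp
  qed
  from eq ne show ?thesis by (simp add: field_simps)
qed


lemma sd_one:
  assumes CV: "C \<subseteq> V" and xV: "x \<in> V" and xn: "x \<notin> C" and yC: "y \<in> C" and e: "E x y"
  shows "setdist E x C = 1"
  unfolding setdist_def
proof (rule Min_eqI)
  show "finite (d x ` C)" using CV finV finite_subset by blast
  show "1 \<in> d x ` C" using yC d_edge[OF e] by force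
  fix t assume "t \<in> d x ` C"
  then obtain z where "z \<in> C" "t = d x z" by auto
  then show "1 \<le> t" using d0[of x z] xV CV xn by (cases "d x z") auto
qed

end

locale geo = drg +
  fixes Cs :: "'a set set"
  assumes geom: "geometric_wrt V E (b 0) Cs"
begin

lemma Cs_del: "C \<in> Cs \<Longrightarrow> delsarte_clique V E k C" using geom unfolding geometric_wrt_def by auto
lemma del_clique: "delsarte_clique V E k C \<Longrightarrow> is_clique V E C" unfolding delsarte_clique_def by auto
lemma del_V: "delsarte_clique V E k C \<Longrightarrow> C \<subseteq> V" unfolding delsarte_clique_def is_clique_def by auto
lemma cl_adj: "delsarte_clique V E k C \<Longrightarrow> x \<in> C \<Longrightarrow> y \<in> C \<Longrightarrow> x \<noteq> y \<Longrightarrow> E x y"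
  unfolding delsarte_clique_def is_clique_def by auto
lemma ex1: "E x y \<Longrightarrow> \<exists>!C. C \<in> Cs \<and> x \<in> C \<and> y \<in> C" using geom unfolding geometric_wrt_def by auto
lemma uniq: "C1 \<in> Cs \<Longrightarrow> C2 \<in> Cs \<Longrightarrow> E x y \<Longrightarrow> x \<in> C1 \<Longrightarrow> y \<in> C1 \<Longrightarrow> x \<in> C2 \<Longrightarrow> y \<in> C2 \<Longrightarrow> C1 = C2"
  using ex1[of x y] by blast

definition "th0 = smallest_eigenvalue V E"
definition "m0 = 1 + real k / (- th0)"

lemma del_card: "delsarte_clique V E k C \<Longrightarrow> real (card C) = m0"
  unfolding delsarte_clique_def m0_def th0_def by auto

lemma cl0: "(th0 - a DD) * P th0 DD = real (b (DD - 1)) * P th0 (DD - 1)"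
proof -
  obtain g x where "eig th0 g" "x \<in> V" "g x \<noteq> 0" using theta_eig eig_adj unfolding th0_def by blast
  then show ?thesis by (rule closure)
qed

lemma edge_ex: "\<exists>x y. E x y"
proof -
  obtain x y where xy: "x \<in> V" "y \<in> V" "d x y = DD" using D_attained by blast
  obtain j where j: "DD = Suc j" using diam2 by (cases DD) auto
  have "(E ^^ Suc j) x y" using walk_d[OF xy(1,2)] xy(3) j by simp
  then show ?thesis by (auto elim: relpowp_Suc_E)
qed

lemma m0_ge2: "m0 \<ge> 2"
proof -
  obtain x y where e: "E x y" using edge_ex by blast
  then obtain C where C: "C \<in> Cs" "x \<in> C" "y \<in> C" using ex1 by blast
  have dC: "delsarte_clique V E k C" using Cs_del C by simp
  have finC: "finite C" using del_V[OF dC] finV finite_subset by blast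
  have "x \<noteq> y" using e Eirr by auto
  then have "{x, y} \<subseteq> C" "card {x, y} = 2" using C by auto
  then have "card C \<ge> 2" using card_mono[OF finC] by metis
  then show ?thesis using del_card[OF dC] by simp
qed

lemma th0_neg: "th0 < 0"
proof (rule ccontr)
  assume "\<not> th0 < 0"
  then have "- th0 \<le> 0" by simp
  then have "real k / (- th0) \<le> 0" by (simp add: divide_nonneg_nonpos)
  then show False using m0_ge2 unfolding m0_def by simp
qed

lemma m0_rel: "(m0 - 1) * th0 = - real k"
  unfolding m0_def using th0_neg by (simp add: field_simps)

definition "Psi0 = m0 * u th0 2 / (u th0 2 - u th0 1)"

lemma psi_const:
  assumes dC: "delsarte_clique V E k C" and xV: "x \<in> V" and sd: "setdist E x C = 1"
  shows "real (psi1_count E x C) = Psi0"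
proof -
  have Cne: "C \<noteq> {}" using del_card[OF dC] m0_ge2 by auto
  have "real (psi1_count E x C) = real (card C) * u th0 2 / (u th0 2 - u th0 1)"
    by (rule psi_formula[OF cl0 del_clique[OF dC] _ _ Cne xV sd])
       (use del_card[OF dC] m0_rel th0_neg in auto)
  then show ?thesis unfolding Psi0_def using del_card[OF dC] by simp
qed


lemma d2_nE: "p \<in> V \<Longrightarrow> q \<in> V \<Longrightarrow> d p q = 2 \<Longrightarrow> \<not> E p q \<and> \<not> E q p \<and> p \<noteq> q"
  using d_edge d_sym d_refl by fastforce

lemma common_nb:
  assumes pV: "p \<in> V" and qV: "q \<in> V" and pq: "d p q = 2"
  shows "real (card {z\<in>V. E q z \<and> E p z}) = real (c 2)"
proof -
  have "{z\<in>V. E q z \<and> d p z + 1 = d p q} = {z\<in>V. E q z \<and> E p z}"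
    using pq d1_iff pV by auto
  then show ?thesis using dr[OF pV qV] pq by simp
qed

lemma part1:
  assumes c2: "c 2 \<ge> 2" and pV: "p \<in> V" and qV: "q \<in> V" and pq: "d p q = 2"
  shows "\<exists>D\<in>Cs. setdist E q D = 1 \<and> psi1_count E q D \<le> tau2_count E Cs p q"
proof -
  note npq = d2_nE[OF pV qV pq]
  have "card {z\<in>V. E q z \<and> E p z} \<noteq> 0" using common_nb[OF pV qV pq] c2 by simp
  then obtain w where w: "w \<in> V" "E q w" "E p w" by (metis (no_types, lifting) card.empty empty_Collect_eq)
  obtain D where D: "D \<in> Cs" "p \<in> D" "w \<in> D" using ex1[OF w(3)] by blast
  have dD: "delsarte_clique V E k D" using Cs_del D by simp
  have DV: "D \<subseteq> V" using del_V[OF dD] .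
  have qD: "q \<notin> D" using cl_adj[OF dD D(2)] npq by auto
  have sdq: "setdist E q D = 1" using sd_one[OF DV qV qD D(3) w(2)] .
  define T where "T = {y\<in>D. E q y}"
  define Cl where "Cl y = (THE C. C \<in> Cs \<and> q \<in> C \<and> y \<in> C)" for y
  have Cl: "Cl y \<in> Cs \<and> q \<in> Cl y \<and> y \<in> Cl y" if "y \<in> T" for y
    unfolding Cl_def by (rule theI'[OF ex1]) (use that T_def in auto)
  define TS where "TS = {C\<in>Cs. q \<in> C \<and> setdist E p C = 1}"
  have finTS: "finite TS"
  proof (rule finite_subset)
    show "TS \<subseteq> Pow V" unfolding TS_def using Cs_del del_V by auto
  qed (use finV in auto)
  have img: "Cl ` T \<subseteq> TS"
  proof
    fix C assume "C \<in> Cl ` T"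
    then obtain y where y: "y \<in> T" "C = Cl y" by auto
    have yD: "y \<in> D" "E q y" using y T_def by auto
    have "y \<noteq> p" using npq yD by auto
    then have epy: "E p y" using cl_adj[OF dD D(2) yD(1)] by simp
    have dC: "delsarte_clique V E k C" using Cl[OF y(1)] y Cs_del by simp
    have "p \<notin> C" using cl_adj[OF dC] Cl[OF y(1)] y npq by blast
    then have "setdist E p C = 1" using sd_one[OF del_V[OF dC] pV _ _ epy] Cl[OF y(1)] y by simp
    then show "C \<in> TS" unfolding TS_def using Cl[OF y(1)] y by simp
  qed
  have inj: "inj_on Cl T"
  proof
    fix y1 y2 assume y: "y1 \<in> T" "y2 \<in> T" "Cl y1 = Cl y2"
    show "y1 = y2"
    proof (rule ccontr)
      assume ne: "y1 \<noteq> y2"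
      have "E y1 y2" using cl_adj[OF dD] y ne T_def by auto
      then have "Cl y1 = D" using uniq[of "Cl y1" D y1 y2] Cl y D T_def by auto
      then show False using Cl[OF y(1)] qD by simp
    qed
  qed
  have "card T \<le> card TS" using card_inj_on_le[OF inj img finTS] .
  then show ?thesis using D(1) sdq unfolding psi1_count_def tau2_count_def T_def TS_def by auto
qed

lemma part2:
  assumes c2: "c 2 \<ge> 2"
  shows "has_induced_quadrangle V E"
proof (rule ccontr)
  assume nq: "\<not> has_induced_quadrangle V E"
  obtain p where p: "p \<in> V" "\<forall>i\<le>DD. \<exists>w\<in>V. d p w = i" using layer by blast
  then obtain q where q: "q \<in> V" "d p q = 2" using diam2 by blast
  note npq = d2_nE[OF p(1) q]
  define W where "W = {z\<in>V. E q z \<and> E p z}"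
  have finW: "finite W" unfolding W_def using finV by simp
  have cW: "card W \<ge> 2" using common_nb[OF p(1) q] c2 unfolding W_def by simp
  have Wadj: "E w1 w2" if "w1 \<in> W" "w2 \<in> W" "w1 \<noteq> w2" for w1 w2
  proof (rule ccontr)
    assume "\<not> E w1 w2"
    then have "\<not> E w2 w1" using Esym by blast
    moreover have "w1 \<noteq> p" "w2 \<noteq> p" "w1 \<noteq> q" "w2 \<noteq> q" using that W_def Eirr by auto
    ultimately have "has_induced_quadrangle V E" unfolding has_induced_quadrangle_def
      using that npq p(1) q(1) W_def Esym \<open>\<not> E w1 w2\<close>
      by (intro bexI[of _ p] bexI[of _ w1] bexI[of _ q] bexI[of _ w2]) auto
    then show False using nq by simp
  qed
  obtain w1 w2 where w12: "w1 \<in> W" "w2 \<in> W" "w1 \<noteq> w2"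
  proof -
    obtain w1 where "w1 \<in> W" using cW by (metis card.empty ex_in_conv not_numeral_le_zero)
    moreover have "card (W - {w1}) \<ge> 1" using cW \<open>w1 \<in> W\<close> finW by simp
    then obtain w2 where "w2 \<in> W - {w1}" by (metis card.empty ex_in_conv not_one_le_zero)
    ultimately show ?thesis using that by blast
  qed
  have w1: "E q w1" "E p w1" "w1 \<in> V" using w12 W_def by auto
  obtain C1 where C1: "C1 \<in> Cs" "q \<in> C1" "w1 \<in> C1" using ex1[OF w1(1)] by blast
  have dC1: "delsarte_clique V E k C1" using Cs_del C1 by simp
  have C1V: "C1 \<subseteq> V" using del_V[OF dC1] .
  have pC1: "p \<notin> C1" using cl_adj[OF dC1 _ C1(2)] npq by auto
  have sdp: "setdist E p C1 = 1" using sd_one[OF C1V p(1) pC1 C1(3) w1(2)] .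
  have sub: "{y\<in>C1. E p y} \<subseteq> W"
  proof
    fix y assume y: "y \<in> {y\<in>C1. E p y}"
    then have "y \<noteq> q" using npq by auto
    then have "E q y" using cl_adj[OF dC1 C1(2)] y by auto
    then show "y \<in> W" using y W_def C1V by auto
  qed
  show False
  proof (cases "W \<subseteq> C1")
    case False
    then obtain w2 where w2: "w2 \<in> W" "w2 \<notin> C1" by blast
    have w2V: "w2 \<in> V" "E w2 q" using w2 W_def Esym by auto
    have sdw: "setdist E w2 C1 = 1" using sd_one[OF C1V w2V(1) w2(2) C1(2) w2V(2)] .
    have "{y\<in>C1. E p y} \<union> {q} \<subseteq> {y\<in>C1. E w2 y}"
    proof
      fix y assume y: "y \<in> {y\<in>C1. E p y} \<union> {q}"
      show "y \<in> {y\<in>C1. E w2 y}"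
      proof (cases "y = q")
        case True then show ?thesis using w2V C1 by simp
      next
        case False
        then have "y \<in> W" "y \<in> C1" using y sub by auto
        moreover have "y \<noteq> w2" using w2 \<open>y \<in> C1\<close> by auto
        ultimately show ?thesis using Wadj[OF w2(1)] by auto
      qed
    qed
    moreover have "q \<notin> {y\<in>C1. E p y}" using npq by auto
    moreover have "finite C1" using C1V finV finite_subset by blast
    ultimately have "card {y\<in>C1. E p y} + 1 \<le> card {y\<in>C1. E w2 y}"
      using card_mono[of "{y\<in>C1. E w2 y}" "{y\<in>C1. E p y} \<union> {q}"] by simp
    moreover have "real (psi1_count E p C1) = real (psi1_count E w2 C1)"
      using psi_const[OF dC1 p(1) sdp] psi_const[OF dC1 w2V(1) sdw] by simp
    ultimately show False unfolding psi1_count_def by simp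
  next
    case True
    then have eqW: "{y\<in>C1. E p y} = W" using sub W_def by auto
    obtain D where D: "D \<in> Cs" "p \<in> D" "w1 \<in> D" using ex1[OF w1(2)] by blast
    have dD: "delsarte_clique V E k D" using Cs_del D by simp
    have DV: "D \<subseteq> V" using del_V[OF dD] .
    have qD: "q \<notin> D" using cl_adj[OF dD D(2)] npq by auto
    have sdq: "setdist E q D = 1" using sd_one[OF DV q(1) qD D(3) w1(1)] .
    have subD: "{y\<in>D. E q y} \<subseteq> W"
    proof
      fix y assume y: "y \<in> {y\<in>D. E q y}"
      then have "y \<noteq> p" using npq by auto
      then have "E p y" using cl_adj[OF dD D(2)] y by auto
      then show "y \<in> W" using y W_def DV by auto
    qed
    have "real (psi1_count E q D) = real (psi1_count E p C1)"
      using psi_const[OF dC1 p(1) sdp] psi_const[OF dD q(1) sdq] by simp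
    then have "card {y\<in>D. E q y} = card W" using eqW unfolding psi1_count_def by simp
    then have "{y\<in>D. E q y} = W" using card_subset_eq[OF finW subD] by simp
    then have "w2 \<in> D" using w12 by auto
    moreover have "w2 \<in> C1" using True w12 by auto
    ultimately have "D = C1" using uniq[OF D(1) C1(1) Wadj[OF w12]] D C1 by auto
    then show False using D(2) pC1 by simp
  qed
qed

end

theorem lemma4p2:
  fixes V :: "'a set" and E :: "'a \<Rightarrow> 'a \<Rightarrow> bool"
    and b c :: "nat \<Rightarrow> nat" and \<C> :: "'a set set"
  assumes drg: "distance_regular V E b c"
    and diam: "diameter V E \<ge> 2"
    and c2: "c 2 \<ge> 2"
    and geom: "geometric_wrt V E (b 0) \<C>"
  shows "(\<forall>C x u v. delsarte_clique V E (b 0) C \<and> x \<in> V \<and> setdist E x C = 1 \<and>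
            u \<in> V \<and> v \<in> V \<and> gdist E u v = 2 \<longrightarrow>
            tau2_count E \<C> u v \<ge> psi1_count E x C)
         \<and> has_induced_quadrangle V E"
proof -
  interpret G: geo V E b c \<C>
    by unfold_locales (use drg diam geom in auto)
  have "tau2_count E \<C> p q \<ge> psi1_count E x C"
    if h: "delsarte_clique V E (b 0) C" "x \<in> V" "setdist E x C = 1" "p \<in> V" "q \<in> V" "gdist E p q = 2"
    for C x p q
  proof -
    obtain D where D: "D \<in> \<C>" "setdist E q D = 1" "psi1_count E q D \<le> tau2_count E \<C> p q"
      using G.part1[OF c2 h(4,5,6)] by blast
    have "real (psi1_count E q D) = real (psi1_count E x C)"
      using G.psi_const[OF G.Cs_del[OF D(1)] h(5) D(2)] G.psi_const[OF h(1,2,3)] by simp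
    then show ?thesis using D(3) by simp
  qed
  then show ?thesis using G.part2[OF c2] by blast
qed

end
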